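(* Let $w\in S_\infty$ and let $D\in\mathcal P(w)$. If $D'$ is obtained from $D$ by applying a chute move of type 1, 2 or 3, or the inverse of a chute move of type 1, 2 or 3, then $D'\in\mathcal P(w)$.
   Context: Permutations: $S_\infty=\bigcup_n S_n$ is generated by the simple transpositions $s_a=(a\ a{+}1)$, $a\ge 1$; $l(w)$ is the Coxeter length of $w$ (minimal number of simple transpositions whose product is $w$). A pipe dream is a finite subset $D\subset\mathbb{Z}_{>0}\times\mathbb{Z}_{>0}$; its elements $(r,c)$ are called crosses (in row $r$, column $c$), and $|D|$ is the number of crosses. The reading word of $D$ is obtained by listing the crosses row by row from top to bottom ($r=1,2,\dots$), within each row from right to left (decreasing $c$), and recording for each cross $(r,c)$ its antidiagonal index $r+c-1$; this gives a word $(a_1,\dots,a_k)$ with $k=|D|$. For $u\in S_\infty$ put $u\star s_a=us_a$ if $l(us_a)=l(u)+1$ and $u\star s_a=u$ otherwise. The Demazure product of $D$ is $\delta(D)=(\cdots((e\star s_{a_1})\star s_{a_2})\cdots)\star s_{a_k}$, where $e$ is the identity. For $w\in S_\infty$, $\mathcal P(w)=\{D \text{ pipe dream}:\delta(D)=w\}$. Chute moves: fix rows $m,m+1$ and columns $c<d$, and suppose $(m,j)\in D$ and $(m+1,j)\in D$ for every $c<j<d$. - Type 1 applies if $(m,c)\notin D$, $(m+1,c)\notin D$, $(m,d)\in D$, $(m+1,d)\notin D$; its result is $(D\setminus\{(m,d)\})\cup\{(m+1,c)\}$. - Type 2 applies if $(m,c)\notin D$, $(m+1,c)\in D$, $(m,d)\in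 D$, $(m+1,d)\notin D$; its result is $D\setminus\{(m,d)\}$. - Type 3 applies under the same conditions as type 2; its result is $D\setminus\{(m+1,c)\}$. The inverse of a chute move of a given type (with given $m,c,d$) is the operation sending the result back to the original configuration (e.g. the inverse of type 2 adds the cross $(m,d)$ to a pipe dream with $(m,c)\notin D$, $(m+1,c)\in D$, $(m,d)\notin D$, $(m+1,d)\notin D$ and all interior boxes of the rectangle filled). *)

theory Defs
  imports Main "HOL-Combinatorics.Transposition"
begin

text \<open>Permutations of the positive integers with finite support (S_infinity),
  represented as functions nat => nat fixing 0. Product uv is composition u o v.\<close>

definition S_inf :: "(nat \<Rightarrow> nat) set" where
  "S_inf = {w. bij w \<and> w 0 = 0 \<and> finite {i. w i \<noteq> i}}"

definition s :: "nat \<Rightarrow> nat \<Rightarrow> nat" where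
  "s a = transpose a (a + 1)"

definition word_prod :: "nat list \<Rightarrow> nat \<Rightarrow> nat" where
  "word_prod as = foldl (\<lambda>u a. u \<circ> s a) id as"

definition len :: "(nat \<Rightarrow> nat) \<Rightarrow> nat" where
  "len w = (LEAST k. \<exists>as. length as = k \<and> (\<forall>a\<in>set as. 1 \<le> a) \<and> word_prod as = w)"

definition dstar :: "(nat \<Rightarrow> nat) \<Rightarrow> nat \<Rightarrow> (nat \<Rightarrow> nat)" where
  "dstar u a = (if len (u \<circ> s a) = len u + 1 then u \<circ> s a else u)"

definition pipe_dream :: "(nat \<times> nat) set \<Rightarrow> bool" where
  "pipe_dream D \<longleftrightarrow> finite D \<and> (\<forall>(r,c)\<in>D. 1 \<le> r \<and> 1 \<le> c)"

definition reading_word :: "(nat \<times> nat) set \<Rightarrow> nat list" where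
  "reading_word D = concat (map (\<lambda>r. map (\<lambda>c. r + c - 1)
       (rev (sorted_list_of_set {c. (r, c) \<in> D}))) [1..<Suc (Max (insert 0 (fst ` D)))])"

definition demazure :: "(nat \<times> nat) set \<Rightarrow> (nat \<Rightarrow> nat)" where
  "demazure D = foldl dstar id (reading_word D)"

definition PD :: "(nat \<Rightarrow> nat) \<Rightarrow> (nat \<times> nat) set set" where
  "PD w = {D. pipe_dream D \<and> demazure D = w}"

definition chute_interior :: "(nat \<times> nat) set \<Rightarrow> nat \<Rightarrow> nat \<Rightarrow> nat \<Rightarrow> bool" where
  "chute_interior D m c d \<longleftrightarrow> 1 \<le> m \<and> 1 \<le> c \<and> c < d \<and>
     (\<forall>j. c < j \<and> j < d \<longrightarrow> (m, j) \<in> D \<and> (m + 1, j) \<in> D)"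

definition chute1 :: "(nat \<times> nat) set \<Rightarrow> (nat \<times> nat) set \<Rightarrow> bool" where
  "chute1 D D' \<longleftrightarrow> (\<exists>m c d. chute_interior D m c d \<and>
     (m, c) \<notin> D \<and> (m + 1, c) \<notin> D \<and> (m, d) \<in> D \<and> (m + 1, d) \<notin> D \<and>
     D' = (D - {(m, d)}) \<union> {(m + 1, c)})"

definition chute2 :: "(nat \<times> nat) set \<Rightarrow> (nat \<times> nat) set \<Rightarrow> bool" where
  "chute2 D D' \<longleftrightarrow> (\<exists>m c d. chute_interior D m c d \<and>
     (m, c) \<notin> D \<and> (m + 1, c) \<in> D \<and> (m, d) \<in> D \<and> (m + 1, d) \<notin> D \<and>
     D' = D - {(m, d)})"

definition chute3 :: "(nat \<times> nat) set \<Rightarrow> (nat \<times> nat) set \<Rightarrow> bool" where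
  "chute3 D D' \<longleftrightarrow> (\<exists>m c d. chute_interior D m c d \<and>
     (m, c) \<notin> D \<and> (m + 1, c) \<in> D \<and> (m, d) \<in> D \<and> (m + 1, d) \<notin> D \<and>
     D' = D - {(m + 1, c)})"

end

theory Submission
  imports Defs
begin


definition sw :: "nat \<Rightarrow> nat \<Rightarrow> nat" where
  "sw a x = (if x = a then Suc a else if x = Suc a then a else x)"

lemma s_sw: "s a = sw a"
  by (auto simp: s_def sw_def transpose_def fun_eq_iff)

lemma sw_sw[simp]: "sw a (sw a x) = x"
  by (auto simp: sw_def)

lemma sw_comp_sw[simp]: "u \<circ> sw a \<circ> sw a = u"
  by (auto simp: fun_eq_iff)

lemma inj_sw: "inj (sw a)"
  by (metis injI sw_sw)

lemma word_prod_snoc: "word_prod (as @ [a]) = word_prod as \<circ> sw a"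
  by (simp add: word_prod_def s_sw)

lemma word_prod_Nil: "word_prod [] = id"
  by (simp add: word_prod_def)

definition good :: "(nat \<Rightarrow> nat) \<Rightarrow> bool" where
  "good u \<longleftrightarrow> inj u \<and> u 0 = 0 \<and> (\<exists>N. \<forall>i\<ge>N. u i = i)"

definition reach :: "(nat \<Rightarrow> nat) \<Rightarrow> bool" where
  "reach u \<longleftrightarrow> (\<exists>as. (\<forall>a\<in>set as. 1 \<le> a) \<and> word_prod as = u)"

lemma good_id: "good id"
  by (auto simp: good_def)

lemma good_sw: assumes "good u" "1 \<le> a" shows "good (u \<circ> sw a)"
proof -
  from assms obtain N where N: "\<forall>i\<ge>N. u i = i" by (auto simp: good_def)
  have "inj (u \<circ> sw a)" using assms inj_sw by (auto simp: good_def intro: inj_compose)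
  moreover have "(u \<circ> sw a) 0 = 0" using assms by (auto simp: good_def sw_def)
  moreover have "\<forall>i\<ge>N + a + 2. (u \<circ> sw a) i = i" using N by (auto simp: sw_def)
  ultimately show ?thesis unfolding good_def by blast
qed

lemma reach_good: "reach u \<Longrightarrow> good u"
proof -
  have "\<forall>a\<in>set as. 1 \<le> a \<Longrightarrow> good (word_prod as)" for as
    by (induction as rule: rev_induct) (auto simp: word_prod_Nil word_prod_snoc good_id good_sw)
  then show "reach u \<Longrightarrow> good u" by (auto simp: reach_def)
qed

lemma reach_id: "reach id"
  unfolding reach_def by (rule exI[of _ "[]"]) (simp add: word_prod_Nil)

lemma reach_sw: "reach u \<Longrightarrow> 1 \<le> a \<Longrightarrow> reach (u \<circ> sw a)"
  unfolding reach_def by (metis Un_iff empty_iff list.set(1) list.set(2) set_append word_prod_snoc insert_iff)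

definition invs :: "(nat \<Rightarrow> nat) \<Rightarrow> (nat \<times> nat) set" where
  "invs u = {(i, j). 0 < i \<and> i < j \<and> u j < u i}"

lemma finite_invs: assumes "good u" shows "finite (invs u)"
proof -
  from assms obtain N where N: "\<forall>i\<ge>N. u i = i" and inj: "inj u" by (auto simp: good_def)
  have "invs u \<subseteq> {..N} \<times> {..N}"
  proof
    fix p assume "p \<in> invs u"
    then obtain i j where p: "p = (i,j)" "0 < i" "i < j" "u j < u i" by (auto simp: invs_def)
    have "j < N"
    proof (rule ccontr)
      assume "\<not> j < N"
      then have uj: "u j = j" using N by auto
      show False
      proof (cases "i \<ge> N")
        case True then show False using N p uj by auto
      next
        case False
        then have "u i \<ge> N" using p uj \<open>\<not> j < N\<close> by auto
        then have "u (u i) = u i" using N by auto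
        then have "u i = i" using inj by (auto dest: injD)
        then show False using False \<open>u i \<ge> N\<close> by auto
      qed
    qed
    then show "p \<in> {..N} \<times> {..N}" using p by auto
  qed
  then show ?thesis by (rule finite_subset) auto
qed

lemma invs_sw_iff:
  assumes "1 \<le> a"
  shows "(i, j) \<in> invs (u \<circ> sw a) - {(a, Suc a)} \<longleftrightarrow> (sw a i, sw a j) \<in> invs u - {(a, Suc a)}"
proof -
  have "(0 < i \<and> i < j \<and> (i,j) \<noteq> (a, Suc a)) \<longleftrightarrow> (0 < sw a i \<and> sw a i < sw a j \<and> (sw a i, sw a j) \<noteq> (a, Suc a))"
    using assms by (auto simp: sw_def)
  then show ?thesis by (auto simp: invs_def)
qed

lemma card_invs_sw:
  assumes "good u" "1 \<le> a"
  shows "card (invs (u \<circ> sw a)) = (if u a < u (Suc a) then card (invs u) + 1 else card (invs u) - 1)"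
    and "\<not> u a < u (Suc a) \<Longrightarrow> card (invs u) \<ge> 1"
proof -
  let ?p = "(a, Suc a)"
  define f where "f = (\<lambda>(i::nat, j::nat). (sw a i, sw a j))"
  have ff: "f (f x) = x" for x by (cases x) (simp add: f_def)
  have iff: "x \<in> invs (u \<circ> sw a) - {?p} \<longleftrightarrow> f x \<in> invs u - {?p}" for x
    using invs_sw_iff[OF assms(2)] by (cases x) (simp add: f_def)
  have eq: "invs (u \<circ> sw a) - {?p} = f ` (invs u - {?p})"
  proof
    show "invs (u \<circ> sw a) - {?p} \<subseteq> f ` (invs u - {?p})"
      using iff ff by (metis image_eqI subsetI)
    show "f ` (invs u - {?p}) \<subseteq> invs (u \<circ> sw a) - {?p}"
    proof
      fix y assume "y \<in> f ` (invs u - {?p})"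
      then obtain x where "x \<in> invs u - {?p}" "y = f x" by auto
      then show "y \<in> invs (u \<circ> sw a) - {?p}" using iff[of y] ff by simp
    qed
  qed
  have injf: "inj f" by (metis ff injI)
  have c: "card (invs (u \<circ> sw a) - {?p}) = card (invs u - {?p})"
    unfolding eq by (rule card_image) (rule inj_on_subset[OF injf], simp)
  have fin1: "finite (invs u)" by (rule finite_invs[OF assms(1)])
  have fin2: "finite (invs (u \<circ> sw a))" by (rule finite_invs[OF good_sw[OF assms]])
  have ne: "u a \<noteq> u (Suc a)" using assms(1) by (auto simp: good_def dest: injD)
  have m1: "?p \<in> invs (u \<circ> sw a) \<longleftrightarrow> u a < u (Suc a)" using assms(2) by (auto simp: invs_def sw_def)
  have m2: "?p \<in> invs u \<longleftrightarrow> u (Suc a) < u a" using assms(2) by (auto simp: invs_def)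
  show "card (invs (u \<circ> sw a)) = (if u a < u (Suc a) then card (invs u) + 1 else card (invs u) - 1)"
  proof (cases "u a < u (Suc a)")
    case True
    then have "card (invs (u \<circ> sw a)) = card (invs (u \<circ> sw a) - {?p}) + 1"
      using m1 fin2 by (metis Suc_eq_plus1 card_Suc_Diff1)
    moreover have "card (invs u - {?p}) = card (invs u)" using m2 True by simp
    ultimately show ?thesis using c True by simp
  next
    case False
    then have "card (invs u) = card (invs u - {?p}) + 1"
      using m2 ne fin1 by (metis Suc_eq_plus1 card_Suc_Diff1 linorder_neqE_nat)
    moreover have "card (invs (u \<circ> sw a) - {?p}) = card (invs (u \<circ> sw a))" using m1 False by simp
    ultimately show ?thesis using c False by simp
  qed
  show "\<not> u a < u (Suc a) \<Longrightarrow> card (invs u) \<ge> 1"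
    using m2 ne fin1 by (metis One_nat_def Suc_leI card_gt_0_iff empty_iff linorder_neqE_nat)
qed



lemma card_invs_word: "\<forall>a\<in>set as. 1 \<le> a \<Longrightarrow> card (invs (word_prod as)) \<le> length as"
proof (induction as rule: rev_induct)
  case Nil
  have "invs (word_prod []) = {}" by (auto simp: word_prod_Nil invs_def)
  then show ?case by simp
next
  case (snoc a as)
  have g: "good (word_prod as)" using snoc reach_good unfolding reach_def by auto
  have "card (invs (word_prod as \<circ> sw a)) \<le> card (invs (word_prod as)) + 1"
    using snoc card_invs_sw(1)[OF g, of a] by (simp split: if_splits)
  moreover have "card (invs (word_prod as)) \<le> length as" using snoc by simp
  ultimately show ?case by (simp only: word_prod_snoc length_append_singleton)
qed

lemma no_invs_id:
  assumes "good u" "invs u = {}" shows "u = id"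
proof -
  from assms obtain N where N: "\<forall>i\<ge>N. u i = i" and inj: "inj u" and u0: "u 0 = 0"
    by (auto simp: good_def)
  have mono: "0 < i \<Longrightarrow> i < j \<Longrightarrow> u i < u j" for i j
  proof -
    assume "0 < i" "i < j"
    then have "\<not> u j < u i" using assms(2) by (auto simp: invs_def)
    moreover have "u i \<noteq> u j" using inj \<open>i < j\<close> by (auto dest: injD)
    ultimately show ?thesis by simp
  qed
  have lo: "0 < i \<Longrightarrow> i \<le> u i" for i
  proof (induction i)
    case 0 then show ?case by simp
  next
    case (Suc i)
    show ?case
    proof (cases "i = 0")
      case True
      then have "u (Suc i) \<noteq> 0" using inj u0 by (metis injD nat.distinct(1))
      then show ?thesis using True by simp
    next
      case False
      then show ?thesis using Suc mono[of i "Suc i"] by simp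
    qed
  qed
  have hi: "u (N - k) \<le> N - k" for k
  proof (induction k)
    case 0 then show ?case using N by simp
  next
    case (Suc k)
    show ?case
    proof (cases "N - Suc k = 0")
      case True then show ?thesis using u0 by simp
    next
      case False
      then have "N - Suc k < N - k" "0 < N - Suc k" by auto
      then show ?thesis using Suc mono[of "N - Suc k" "N - k"] by simp
    qed
  qed
  show ?thesis
  proof
    fix i
    show "u i = id i"
    proof (cases "N \<le> i")
      case True then show ?thesis using N by simp
    next
      case False
      then have "u i \<le> i" using hi[of "N - i"] by simp
      moreover have "i = 0 \<or> i \<le> u i" using lo by auto
      ultimately show ?thesis using u0 by auto
    qed
  qed
qed

lemma descent_exists:
  assumes "(i, j) \<in> invs u" shows "\<exists>a. 1 \<le> a \<and> u (Suc a) < u a"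
  using assms
proof (induction "j - i" arbitrary: i)
  case 0 then show ?case by (simp add: invs_def)
next
  case (Suc k)
  then have ij: "0 < i" "i < j" "u j < u i" by (auto simp: invs_def)
  show ?case
  proof (cases "u (Suc i) < u i")
    case True then show ?thesis using ij by (intro exI[of _ i]) auto
  next
    case False
    show ?thesis
    proof (cases "Suc i = j")
      case True then show ?thesis using False ij by simp
    next
      case ne: False
      have "(Suc i, j) \<in> invs u" using False ij ne by (auto simp: invs_def)
      then show ?thesis using Suc(1)[of "Suc i"] Suc(2) by simp
    qed
  qed
qed

lemma word_of_invs:
  "reach u \<Longrightarrow> \<exists>as. length as = card (invs u) \<and> (\<forall>a\<in>set as. 1 \<le> a) \<and> word_prod as = u"
proof (induction "card (invs u)" arbitrary: u)
  case 0
  have g: "good u" using 0 reach_good by auto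
  then have "invs u = {}" using 0 finite_invs by simp
  then have "u = id" using no_invs_id g by simp
  then show ?case by (intro exI[of _ "[]"]) (simp add: word_prod_Nil 0)
next
  case (Suc n)
  have g: "good u" using Suc reach_good by auto
  from Suc(2) obtain p where "p \<in> invs u" by (metis card.empty empty_iff nat.distinct(1) ex_in_conv)
  then obtain a where a: "1 \<le> a" "u (Suc a) < u a"
    using descent_exists by (cases p) blast
  then have "\<not> u a < u (Suc a)" by simp
  then have c: "card (invs (u \<circ> sw a)) = n" using card_invs_sw(1)[OF g a(1)] Suc(2) by simp
  obtain bs where bs: "length bs = n" "\<forall>b\<in>set bs. 1 \<le> b" "word_prod bs = u \<circ> sw a"
    using Suc(1)[OF c[symmetric] reach_sw[OF Suc(3) a(1)]] c by auto
  show ?case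
    by (rule exI[of _ "bs @ [a]"]) (use bs a Suc(2) in \<open>auto simp: word_prod_snoc\<close>)
qed

lemma len_invs: "reach u \<Longrightarrow> len u = card (invs u)"
  unfolding len_def
proof (rule Least_equality)
  assume "reach u"
  then show "\<exists>as. length as = card (invs u) \<and> (\<forall>a\<in>set as. 1 \<le> a) \<and> word_prod as = u"
    by (rule word_of_invs)
next
  fix k assume "\<exists>as. length as = k \<and> (\<forall>a\<in>set as. 1 \<le> a) \<and> word_prod as = u"
  then show "card (invs u) \<le> k" using card_invs_word by blast
qed

definition dm :: "(nat \<Rightarrow> nat) \<Rightarrow> nat \<Rightarrow> (nat \<Rightarrow> nat)" where
  "dm u a = (if u a < u (Suc a) then u \<circ> sw a else u)"

lemma dstar_dm: assumes "reach u" "1 \<le> a" shows "dstar u a = dm u a"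
proof -
  have g: "good u" using assms reach_good by auto
  have l1: "len (u \<circ> s a) = card (invs (u \<circ> sw a))"
    using len_invs[OF reach_sw[OF assms]] by (simp add: s_sw)
  have l2: "len u = card (invs u)" using len_invs[OF assms(1)] .
  show ?thesis
    using card_invs_sw[OF g assms(2)] l1 l2 by (auto simp: dstar_def dm_def s_sw)
qed

lemma reach_dm: "reach u \<Longrightarrow> 1 \<le> a \<Longrightarrow> reach (dm u a)"
  by (simp add: dm_def reach_sw)

lemma foldl_dstar_dm: "reach u \<Longrightarrow> \<forall>a\<in>set as. 1 \<le> a \<Longrightarrow> foldl dstar u as = foldl dm u as"
  by (induction as arbitrary: u) (auto simp: dstar_dm reach_dm)



lemma inj_dm: "inj u \<Longrightarrow> inj (dm u a)"
  unfolding dm_def using inj_compose[OF _ inj_sw, of u a] by simp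

lemma dm_idem: "inj u \<Longrightarrow> dm (dm u a) a = dm u a"
  by (auto simp: dm_def sw_def)

lemma dm_comm: assumes "Suc (Suc a) \<le> b \<or> Suc (Suc b) \<le> a"
  shows "dm (dm u a) b = dm (dm u b) a"
proof -
  have 1: "sw a \<circ> sw b = sw b \<circ> sw a" using assms by (auto simp: sw_def fun_eq_iff)
  have 2: "(u \<circ> sw a) b = u b" "(u \<circ> sw a) (Suc b) = u (Suc b)"
          "(u \<circ> sw b) a = u a" "(u \<circ> sw b) (Suc a) = u (Suc a)"
    using assms by (auto simp: sw_def)
  show ?thesis
    unfolding dm_def using 1 2 by (auto simp: comp_assoc)
qed

lemma dm_yes: "u a < u (Suc a) \<Longrightarrow> dm u a = u \<circ> sw a" by (simp add: dm_def)
lemma dm_no: "\<not> u a < u (Suc a) \<Longrightarrow> dm u a = u" by (simp add: dm_def)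
lemma dm_braid: assumes "inj u"
  shows "dm (dm (dm u a) (Suc a)) a = dm (dm (dm u (Suc a)) a) (Suc a)"
proof -
  have ne: "u a \<noteq> u (Suc a)" "u a \<noteq> u (Suc (Suc a))" "u (Suc a) \<noteq> u (Suc (Suc a))"
    using assms by (simp_all add: inj_eq)
  have ev: "\<And>v. (v \<circ> sw a) a = v (Suc a)" "\<And>v. (v \<circ> sw a) (Suc a) = v a"
     "\<And>v. (v \<circ> sw a) (Suc (Suc a)) = v (Suc (Suc a))"
     "\<And>v. (v \<circ> sw (Suc a)) a = v a" "\<And>v. (v \<circ> sw (Suc a)) (Suc a) = v (Suc (Suc a))"
     "\<And>v. (v \<circ> sw (Suc a)) (Suc (Suc a)) = v (Suc a)"
    by (simp_all add: sw_def)
  have br: "v \<circ> sw a \<circ> sw (Suc a) \<circ> sw a = v \<circ> sw (Suc a) \<circ> sw a \<circ> sw (Suc a)" for v :: "nat \<Rightarrow> nat"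
  proof
    fix x show "(v \<circ> sw a \<circ> sw (Suc a) \<circ> sw a) x = (v \<circ> sw (Suc a) \<circ> sw a \<circ> sw (Suc a)) x"
      by (simp add: sw_def)
  qed
  have cs: "(u a < u (Suc a) \<and> u (Suc a) < u (Suc (Suc a))) \<or> (u a < u (Suc (Suc a)) \<and> u (Suc (Suc a)) < u (Suc a)) \<or> (u (Suc a) < u a \<and> u a < u (Suc (Suc a))) \<or> (u (Suc (Suc a)) < u a \<and> u a < u (Suc a)) \<or> (u (Suc a) < u (Suc (Suc a)) \<and> u (Suc (Suc a)) < u a) \<or> (u (Suc (Suc a)) < u (Suc a) \<and> u (Suc a) < u a)"
    using ne by arith
  have h0: "u a < u (Suc a) \<and> u (Suc a) < u (Suc (Suc a)) \<Longrightarrow> ?thesis"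
  proof -
    assume c: "u a < u (Suc a) \<and> u (Suc a) < u (Suc (Suc a))"
    have l0: "dm u a = (u \<circ> sw a)"
      by (rule dm_yes) (use c in \<open>simp add: sw_def\<close>)
    have l1: "dm (u \<circ> sw a) (Suc a) = ((u \<circ> sw a) \<circ> sw (Suc a))"
      by (rule dm_yes) (use c in \<open>simp add: sw_def\<close>)
    have l2: "dm ((u \<circ> sw a) \<circ> sw (Suc a)) a = (((u \<circ> sw a) \<circ> sw (Suc a)) \<circ> sw a)"
      by (rule dm_yes) (use c in \<open>simp add: sw_def\<close>)
    have r0: "dm u (Suc a) = (u \<circ> sw (Suc a))"
      by (rule dm_yes) (use c in \<open>simp add: sw_def\<close>)
    have r1: "dm (u \<circ> sw (Suc a)) a = ((u \<circ> sw (Suc a)) \<circ> sw a)"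
      by (rule dm_yes) (use c in \<open>simp add: sw_def\<close>)
    have r2: "dm ((u \<circ> sw (Suc a)) \<circ> sw a) (Suc a) = (((u \<circ> sw (Suc a)) \<circ> sw a) \<circ> sw (Suc a))"
      by (rule dm_yes) (use c in \<open>simp add: sw_def\<close>)
    show ?thesis
      by (simp only: l0 l1 l2 r0 r1 r2 br)
  qed
  have h1: "u a < u (Suc (Suc a)) \<and> u (Suc (Suc a)) < u (Suc a) \<Longrightarrow> ?thesis"
  proof -
    assume c: "u a < u (Suc (Suc a)) \<and> u (Suc (Suc a)) < u (Suc a)"
    have l0: "dm u a = (u \<circ> sw a)"
      by (rule dm_yes) (use c in \<open>simp add: sw_def\<close>)
    have l1: "dm (u \<circ> sw a) (Suc a) = ((u \<circ> sw a) \<circ> sw (Suc a))"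
      by (rule dm_yes) (use c in \<open>simp add: sw_def\<close>)
    have l2: "dm ((u \<circ> sw a) \<circ> sw (Suc a)) a = ((u \<circ> sw a) \<circ> sw (Suc a))"
      by (rule dm_no) (use c in \<open>simp add: sw_def\<close>)
    have r0: "dm u (Suc a) = u"
      by (rule dm_no) (use c in \<open>simp add: sw_def\<close>)
    have r1: "dm u a = (u \<circ> sw a)"
      by (rule dm_yes) (use c in \<open>simp add: sw_def\<close>)
    have r2: "dm (u \<circ> sw a) (Suc a) = ((u \<circ> sw a) \<circ> sw (Suc a))"
      by (rule dm_yes) (use c in \<open>simp add: sw_def\<close>)
    show ?thesis
      by (simp only: l0 l1 l2 r0 r1 r2 br)
  qed
  have h2: "u (Suc a) < u a \<and> u a < u (Suc (Suc a)) \<Longrightarrow> ?thesis"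
  proof -
    assume c: "u (Suc a) < u a \<and> u a < u (Suc (Suc a))"
    have l0: "dm u a = u"
      by (rule dm_no) (use c in \<open>simp add: sw_def\<close>)
    have l1: "dm u (Suc a) = (u \<circ> sw (Suc a))"
      by (rule dm_yes) (use c in \<open>simp add: sw_def\<close>)
    have l2: "dm (u \<circ> sw (Suc a)) a = ((u \<circ> sw (Suc a)) \<circ> sw a)"
      by (rule dm_yes) (use c in \<open>simp add: sw_def\<close>)
    have r0: "dm u (Suc a) = (u \<circ> sw (Suc a))"
      by (rule dm_yes) (use c in \<open>simp add: sw_def\<close>)
    have r1: "dm (u \<circ> sw (Suc a)) a = ((u \<circ> sw (Suc a)) \<circ> sw a)"
      by (rule dm_yes) (use c in \<open>simp add: sw_def\<close>)
    have r2: "dm ((u \<circ> sw (Suc a)) \<circ> sw a) (Suc a) = ((u \<circ> sw (Suc a)) \<circ> sw a)"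
      by (rule dm_no) (use c in \<open>simp add: sw_def\<close>)
    show ?thesis
      by (simp only: l0 l1 l2 r0 r1 r2 br)
  qed
  have h3: "u (Suc (Suc a)) < u a \<and> u a < u (Suc a) \<Longrightarrow> ?thesis"
  proof -
    assume c: "u (Suc (Suc a)) < u a \<and> u a < u (Suc a)"
    have l0: "dm u a = (u \<circ> sw a)"
      by (rule dm_yes) (use c in \<open>simp add: sw_def\<close>)
    have l1: "dm (u \<circ> sw a) (Suc a) = (u \<circ> sw a)"
      by (rule dm_no) (use c in \<open>simp add: sw_def\<close>)
    have l2: "dm (u \<circ> sw a) a = (u \<circ> sw a)"
      by (rule dm_no) (use c in \<open>simp add: sw_def\<close>)
    have r0: "dm u (Suc a) = u"
      by (rule dm_no) (use c in \<open>simp add: sw_def\<close>)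
    have r1: "dm u a = (u \<circ> sw a)"
      by (rule dm_yes) (use c in \<open>simp add: sw_def\<close>)
    have r2: "dm (u \<circ> sw a) (Suc a) = (u \<circ> sw a)"
      by (rule dm_no) (use c in \<open>simp add: sw_def\<close>)
    show ?thesis
      by (simp only: l0 l1 l2 r0 r1 r2 br)
  qed
  have h4: "u (Suc a) < u (Suc (Suc a)) \<and> u (Suc (Suc a)) < u a \<Longrightarrow> ?thesis"
  proof -
    assume c: "u (Suc a) < u (Suc (Suc a)) \<and> u (Suc (Suc a)) < u a"
    have l0: "dm u a = u"
      by (rule dm_no) (use c in \<open>simp add: sw_def\<close>)
    have l1: "dm u (Suc a) = (u \<circ> sw (Suc a))"
      by (rule dm_yes) (use c in \<open>simp add: sw_def\<close>)
    have l2: "dm (u \<circ> sw (Suc a)) a = (u \<circ> sw (Suc a))"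
      by (rule dm_no) (use c in \<open>simp add: sw_def\<close>)
    have r0: "dm u (Suc a) = (u \<circ> sw (Suc a))"
      by (rule dm_yes) (use c in \<open>simp add: sw_def\<close>)
    have r1: "dm (u \<circ> sw (Suc a)) a = (u \<circ> sw (Suc a))"
      by (rule dm_no) (use c in \<open>simp add: sw_def\<close>)
    have r2: "dm (u \<circ> sw (Suc a)) (Suc a) = (u \<circ> sw (Suc a))"
      by (rule dm_no) (use c in \<open>simp add: sw_def\<close>)
    show ?thesis
      by (simp only: l0 l1 l2 r0 r1 r2 br)
  qed
  have h5: "u (Suc (Suc a)) < u (Suc a) \<and> u (Suc a) < u a \<Longrightarrow> ?thesis"
  proof -
    assume c: "u (Suc (Suc a)) < u (Suc a) \<and> u (Suc a) < u a"
    have l0: "dm u a = u"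
      by (rule dm_no) (use c in \<open>simp add: sw_def\<close>)
    have l1: "dm u (Suc a) = u"
      by (rule dm_no) (use c in \<open>simp add: sw_def\<close>)
    have l2: "dm u a = u"
      by (rule dm_no) (use c in \<open>simp add: sw_def\<close>)
    have r0: "dm u (Suc a) = u"
      by (rule dm_no) (use c in \<open>simp add: sw_def\<close>)
    have r1: "dm u a = u"
      by (rule dm_no) (use c in \<open>simp add: sw_def\<close>)
    have r2: "dm u (Suc a) = u"
      by (rule dm_no) (use c in \<open>simp add: sw_def\<close>)
    show ?thesis
      by (simp only: l0 l1 l2 r0 r1 r2 br)
  qed
  show ?thesis using cs h0 h1 h2 h3 h4 h5 by blast
qed

definition eqv :: "nat list \<Rightarrow> nat list \<Rightarrow> bool" where
  "eqv xs ys \<longleftrightarrow> (\<forall>u. inj u \<longrightarrow> foldl dm u xs = foldl dm u ys)"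

lemma inj_foldl_dm: "inj u \<Longrightarrow> inj (foldl dm u xs)"
  by (induction xs arbitrary: u) (auto simp: inj_dm)

lemma eqv_refl: "eqv xs xs" by (simp add: eqv_def)
lemma eqv_sym: "eqv xs ys \<Longrightarrow> eqv ys xs" by (simp add: eqv_def)
lemma eqv_trans: "eqv xs ys \<Longrightarrow> eqv ys zs \<Longrightarrow> eqv xs zs" by (simp add: eqv_def)

lemma eqv_cong: "eqv xs ys \<Longrightarrow> eqv (p @ xs @ q) (p @ ys @ q)"
  unfolding eqv_def by (simp add: inj_foldl_dm)

lemma eqv_cong_l: "eqv xs ys \<Longrightarrow> eqv (p @ xs) (p @ ys)"
  using eqv_cong[of xs ys p "[]"] by simp
lemma eqv_cong_r: "eqv xs ys \<Longrightarrow> eqv (xs @ q) (ys @ q)"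
  using eqv_cong[of xs ys "[]" q] by simp

lemma eqv_idem: "eqv [a, a] [a]"
  unfolding eqv_def by (simp add: dm_idem)

lemma eqv_braid: "eqv [a, Suc a, a] [Suc a, a, Suc a]"
  unfolding eqv_def by (simp add: dm_braid)

lemma eqv_comm1: assumes "Suc (Suc a) \<le> b \<or> Suc (Suc b) \<le> a" shows "eqv [a, b] [b, a]"
  unfolding eqv_def using dm_comm[OF assms] by simp

definition far :: "nat list \<Rightarrow> nat list \<Rightarrow> bool" where
  "far xs ys \<longleftrightarrow> (\<forall>x\<in>set xs. \<forall>y\<in>set ys. Suc (Suc x) \<le> y \<or> Suc (Suc y) \<le> x)"

lemma eqv_comm_single: "far [x] ys \<Longrightarrow> eqv (x # ys) (ys @ [x])"
proof (induction ys)
  case Nil then show ?case by (simp add: eqv_refl)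
next
  case (Cons y ys)
  have "eqv (x # y # ys) (y # x # ys)"
    using eqv_cong_r[OF eqv_comm1[of x y], of ys] Cons(2) by (simp add: far_def)
  moreover have "eqv (y # x # ys) (y # ys @ [x])"
    using eqv_cong_l[OF Cons(1), of "[y]"] Cons(2) by (simp add: far_def)
  ultimately show ?case by (simp add: eqv_trans)
qed

lemma eqv_comm: "far xs ys \<Longrightarrow> eqv (xs @ ys) (ys @ xs)"
proof (induction xs)
  case Nil then show ?case by (simp add: eqv_refl)
next
  case (Cons x xs)
  have "eqv (x # xs @ ys) (x # ys @ xs)"
    using eqv_cong_l[OF Cons(1), of "[x]"] Cons(2) by (simp add: far_def)
  moreover have "eqv (x # ys @ xs) (ys @ [x] @ xs)"
    using eqv_cong_r[OF eqv_comm_single[of x ys], of xs] Cons(2) by (simp add: far_def)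
  ultimately show ?case by (auto intro: eqv_trans)
qed

definition dn :: "nat \<Rightarrow> nat \<Rightarrow> nat list" where
  "dn a k = rev [a..<a+k]"

lemma dn_Suc: "dn a (Suc k) = dn (Suc a) k @ [a]"
  by (simp add: dn_def upt_rec)

lemma dn_Suc_top: "dn a (Suc k) = (a + k) # dn a k"
  by (simp add: dn_def)

lemma set_dn: "set (dn a k) = {a..<a+k}"
  by (simp add: dn_def)

lemma keyL: "eqv (dn a (Suc k) @ dn (Suc a) k) (dn a k @ dn a (Suc k))"
proof (induction k arbitrary: a)
  case 0 then show ?case by (simp add: dn_def eqv_refl)
next
  case (Suc k)
  define A where "A = dn (Suc a) (Suc k)"
  define B where "B = dn (Suc (Suc a)) k"
  define C where "C = dn (Suc a) k"
  have A: "A = B @ [Suc a]" unfolding A_def B_def by (rule dn_Suc)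
  have e1: "dn a (Suc (Suc k)) @ dn (Suc a) (Suc k) = A @ [a] @ B @ [Suc a]"
    unfolding A_def B_def by (simp add: dn_Suc[of a "Suc k"] dn_Suc[of "Suc a" k])
  have far1: "far [a] B" by (auto simp: far_def set_dn B_def)
  have far2: "far B [a]" by (auto simp: far_def set_dn B_def)
  have s1: "eqv (A @ [a] @ B @ [Suc a]) (A @ B @ [a] @ [Suc a])"
    using eqv_cong[OF eqv_comm[OF far1], of A "[Suc a]"] by simp
  have IH: "eqv (A @ B) (C @ A)" using Suc[of "Suc a"] unfolding A_def B_def C_def .
  have s2: "eqv (A @ B @ [a] @ [Suc a]) (C @ B @ [Suc a] @ [a] @ [Suc a])"
    using eqv_cong_r[OF IH, of "[a] @ [Suc a]"] A by simp
  have s3: "eqv (C @ B @ [Suc a] @ [a] @ [Suc a]) (C @ B @ [a] @ [Suc a, a])"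
    using eqv_cong_l[OF eqv_sym[OF eqv_braid[of a]], of "C @ B"] by simp
  have s4: "eqv (C @ B @ [a] @ [Suc a, a]) (C @ [a] @ B @ [Suc a, a])"
    using eqv_cong[OF eqv_comm[OF far2], of C "[Suc a, a]"] by simp
  have e3: "C @ [a] @ B @ [Suc a, a] = dn a (Suc k) @ dn a (Suc (Suc k))"
    unfolding C_def B_def by (simp add: dn_Suc[of a k] dn_Suc[of a "Suc k"] dn_Suc[of "Suc a" k])
  have "eqv (A @ [a] @ B @ [Suc a]) (C @ [a] @ B @ [Suc a, a])"
    by (rule eqv_trans[OF s1 eqv_trans[OF s2 eqv_trans[OF s3 s4]]])
  then show ?case unfolding e1 e3 .
qed

lemma keyL': "1 \<le> n \<Longrightarrow> eqv (dn a n @ dn (Suc a) (n - 1)) (dn a (n - 1) @ dn a n)"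
  using keyL[of a "n - 1"] by simp

lemma key2: "1 \<le> n \<Longrightarrow> eqv (dn a n @ dn a n) (dn a (n - 1) @ dn a n)"
proof -
  assume n: "1 \<le> n"
  then obtain k where k: "n = Suc k" by (cases n) auto
  have e1: "dn a n @ dn a n = (dn a (Suc k) @ dn (Suc a) k) @ [a]" using k by (simp add: dn_Suc[of a k])
  have s1: "eqv ((dn a (Suc k) @ dn (Suc a) k) @ [a]) ((dn a k @ dn a (Suc k)) @ [a])"
    by (rule eqv_cong_r[OF keyL])
  have e2: "(dn a k @ dn a (Suc k)) @ [a] = (dn a k @ dn (Suc a) k) @ [a, a]" by (simp add: dn_Suc[of a k])
  have s2: "eqv ((dn a k @ dn (Suc a) k) @ [a, a]) ((dn a k @ dn (Suc a) k) @ [a])"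
    by (rule eqv_cong_l[OF eqv_idem])
  have e3: "(dn a k @ dn (Suc a) k) @ [a] = dn a (n - 1) @ dn a n" using k by (simp add: dn_Suc[of a k])
  show ?thesis unfolding e1 e3[symmetric] using eqv_trans[OF s1 s2[folded e2]] .
qed

lemma key3: "1 \<le> n \<Longrightarrow> eqv (dn a n @ dn a n) (dn a n @ dn (Suc a) (n - 1))"
  using key2 keyL' eqv_trans eqv_sym by blast



definition row :: "(nat \<times> nat) set \<Rightarrow> nat \<Rightarrow> nat list" where
  "row D r = map (\<lambda>c. r + c - 1) (rev (sorted_list_of_set {c. (r, c) \<in> D}))"

lemma rw_row: "reading_word D = concat (map (row D) [1..<Suc (Max (insert 0 (fst ` D)))])"
  by (simp add: reading_word_def row_def[abs_def])

lemma fin_row: "finite D \<Longrightarrow> finite {j. (r, j) \<in> D \<and> P j}"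
  by (rule finite_subset[of _ "snd ` D"]) force+

lemma fin_row': "finite D \<Longrightarrow> finite {j. (r, j) \<in> D}"
  using fin_row[of D r "\<lambda>_. True"] by simp

lemma rw_K:
  assumes "finite D" "Max (insert 0 (fst ` D)) \<le> K"
  shows "reading_word D = concat (map (row D) [1..<Suc K])"
proof -
  let ?M = "Max (insert 0 (fst ` D))"
  have up: "[1..<Suc K] = [1..<Suc ?M] @ [Suc ?M..<Suc K]"
    using upt_add_eq_append[of 1 "Suc ?M" "K - ?M"] assms(2) by simp
  have "row D r = []" if "Suc ?M \<le> r" for r
  proof -
    have "{c. (r, c) \<in> D} = {}"
    proof (rule ccontr)
      assume "{c. (r, c) \<in> D} \<noteq> {}"
      then obtain c where "(r, c) \<in> D" by auto
      then have "r \<in> insert 0 (fst ` D)" by force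
      then have "r \<le> ?M" using assms(1) by (simp add: Max_ge)
      then show False using that by simp
    qed
    then show ?thesis by (simp add: row_def)
  qed
  then have "concat (map (row D) [Suc ?M..<Suc K]) = []" by (auto simp: concat_eq_Nil_conv)
  then show ?thesis unfolding rw_row up by simp
qed

lemma upt_mid: assumes "1 \<le> m" "Suc m \<le> K"
  shows "[1..<Suc K] = [1..<m] @ [m, Suc m] @ [Suc (Suc m)..<Suc K]"
proof -
  have a: "[1..<Suc K] = [1..<m] @ [m..<Suc K]" using upt_add_eq_append[of 1 m "Suc K - m"] assms by simp
  have b: "[m..<Suc K] = m # Suc m # [Suc (Suc m)..<Suc K]" using assms by (simp add: upt_conv_Cons)
  show ?thesis using a b by simp
qed

lemma sl_app:
  assumes "finite A" "finite B" "\<forall>x\<in>A. \<forall>y\<in>B. x < y"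
  shows "sorted_list_of_set (A \<union> B) = sorted_list_of_set A @ sorted_list_of_set B"
proof (rule sorted_distinct_set_unique)
  show "sorted (sorted_list_of_set A @ sorted_list_of_set B)"
    using assms by (auto simp: sorted_append less_imp_le)
  show "distinct (sorted_list_of_set A @ sorted_list_of_set B)"
    using assms by auto
qed (use assms in auto)

lemma sl_split3:
  assumes "finite A" "c \<le> d"
  shows "sorted_list_of_set A = sorted_list_of_set {x\<in>A. x < c} @ sorted_list_of_set {x\<in>A. c \<le> x \<and> x \<le> d}
     @ sorted_list_of_set {x\<in>A. d < x}" (is "_ = ?a @ ?b @ ?c")
proof -
  have "A = {x\<in>A. x < c} \<union> ({x\<in>A. c \<le> x \<and> x \<le> d} \<union> {x\<in>A. d < x})" by auto
  then have "sorted_list_of_set A = sorted_list_of_set ({x\<in>A. x < c} \<union> ({x\<in>A. c \<le> x \<and> x \<le> d} \<union> {x\<in>A. d < x}))"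
    by simp
  also have "\<dots> = ?a @ sorted_list_of_set ({x\<in>A. c \<le> x \<and> x \<le> d} \<union> {x\<in>A. d < x})"
    by (rule sl_app) (use assms in force)+
  also have "sorted_list_of_set ({x\<in>A. c \<le> x \<and> x \<le> d} \<union> {x\<in>A. d < x}) = ?b @ ?c"
    by (rule sl_app) (use assms in auto)
  finally show ?thesis by simp
qed

definition mw :: "nat \<Rightarrow> nat \<Rightarrow> (nat \<times> nat) set \<Rightarrow> nat \<Rightarrow> nat list" where
  "mw c d E r = map (\<lambda>j. r + j - 1) (rev (sorted_list_of_set {j. (r, j) \<in> E \<and> c \<le> j \<and> j \<le> d}))"
definition lw :: "nat \<Rightarrow> (nat \<times> nat) set \<Rightarrow> nat \<Rightarrow> nat list" where
  "lw c E r = map (\<lambda>j. r + j - 1) (rev (sorted_list_of_set {j. (r, j) \<in> E \<and> j < c}))"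
definition hw :: "nat \<Rightarrow> (nat \<times> nat) set \<Rightarrow> nat \<Rightarrow> nat list" where
  "hw d E r = map (\<lambda>j. r + j - 1) (rev (sorted_list_of_set {j. (r, j) \<in> E \<and> d < j}))"

lemma row_split: "finite E \<Longrightarrow> c \<le> d \<Longrightarrow> row E r = hw d E r @ mw c d E r @ lw c E r"
proof -
  assume f: "finite E" and cd: "c \<le> d"
  have e: "{x \<in> {c. (r, c) \<in> E}. P x} = {j. (r, j) \<in> E \<and> P j}" for P by auto
  show ?thesis
    unfolding row_def mw_def lw_def hw_def
    using sl_split3[OF fin_row'[OF f, of r] cd] by (simp add: e)
qed

lemma set_row_part: "finite E \<Longrightarrow> set (map (\<lambda>j. r + j - 1) (rev (sorted_list_of_set {j. (r, j) \<in> E \<and> P j})))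
   = (\<lambda>j. r + j - 1) ` {j. (r, j) \<in> E \<and> P j}"
  using fin_row[of E r P] by simp

lemma rect:
  assumes "far L H" "far M1 H" "far M2 H" "far L N1" "far L N2" "eqv (M1 @ N1) (M2 @ N2)"
  shows "eqv (M1 @ L @ H @ N1) (M2 @ L @ H @ N2)"
proof -
  have gen: "eqv (M @ L @ H @ N) (H @ M @ N @ L)" if "far M H" "far L N" for M N
  proof -
    have 1: "eqv (M @ L @ H @ N) (M @ H @ L @ N)"
      using eqv_cong[OF eqv_comm[OF assms(1)], of M N] by simp
    have 2: "eqv (M @ H @ L @ N) (H @ M @ L @ N)"
      using eqv_cong[OF eqv_comm[OF that(1)], of "[]" "L @ N"] by simp
    have 3: "eqv (H @ M @ L @ N) (H @ M @ N @ L)"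
      using eqv_cong[OF eqv_comm[OF that(2)], of "H @ M" "[]"] by simp
    show ?thesis using eqv_trans[OF 1 eqv_trans[OF 2 3]] .
  qed
  have 4: "eqv (H @ M1 @ N1 @ L) (H @ M2 @ N2 @ L)"
    using eqv_cong[OF assms(6), of H L] by simp
  show ?thesis
    using eqv_trans[OF gen[OF assms(2,4)] eqv_trans[OF 4 eqv_sym[OF gen[OF assms(3,5)]]]] .
qed



lemma core:
  assumes fD: "finite D" and fD': "finite D'" and m: "1 \<le> m" and cd: "c < d"
  and rows: "\<And>r j. r \<noteq> m \<Longrightarrow> r \<noteq> Suc m \<Longrightarrow> (r, j) \<in> D \<longleftrightarrow> (r, j) \<in> D'"
  and outer: "\<And>r j. r = m \<or> r = Suc m \<Longrightarrow> j < c \<or> d < j \<Longrightarrow> (r, j) \<in> D \<longleftrightarrow> (r, j) \<in> D'"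
  and mid: "eqv (mw c d D m @ mw c d D (Suc m)) (mw c d D' m @ mw c d D' (Suc m))"
  and bnd: "\<And>x. x \<in> set (mw c d D m @ mw c d D (Suc m) @ mw c d D' m @ mw c d D' (Suc m)) \<Longrightarrow>
             m + c \<le> x \<and> Suc x \<le> m + d"
  shows "eqv (reading_word D) (reading_word D')"
proof -
  define K where "K = max (max (Max (insert 0 (fst ` D))) (Max (insert 0 (fst ` D')))) (Suc m)"
  have K: "Max (insert 0 (fst ` D)) \<le> K" "Max (insert 0 (fst ` D')) \<le> K" "Suc m \<le> K"
    unfolding K_def by auto
  have split: "reading_word E = concat (map (row E) [1..<m]) @ row E m @ row E (Suc m)
      @ concat (map (row E) [Suc (Suc m)..<Suc K])" if "finite E" "Max (insert 0 (fst ` E)) \<le> K" for E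
    unfolding rw_K[OF that] upt_mid[OF m K(3)] by simp
  have rowsame: "row D r = row D' r" if "r \<noteq> m" "r \<noteq> Suc m" for r
  proof -
    have "{c. (r, c) \<in> D} = {c. (r, c) \<in> D'}" using rows[OF that] by auto
    then show ?thesis by (simp add: row_def)
  qed
  have P: "concat (map (row D) [1..<m]) = concat (map (row D') [1..<m])"
    by (rule arg_cong[where f=concat], rule map_cong) (auto intro: rowsame)
  have Q: "concat (map (row D) [Suc (Suc m)..<Suc K]) = concat (map (row D') [Suc (Suc m)..<Suc K])"
    by (rule arg_cong[where f=concat], rule map_cong) (auto intro: rowsame)
  have lsame: "lw c D r = lw c D' r" if "r = m \<or> r = Suc m" for r
  proof -
    have "{j. (r, j) \<in> D \<and> j < c} = {j. (r, j) \<in> D' \<and> j < c}" using outer[OF that] by auto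
    then show ?thesis by (simp add: lw_def)
  qed
  have hsame: "hw d D r = hw d D' r" if "r = m \<or> r = Suc m" for r
  proof -
    have "{j. (r, j) \<in> D \<and> d < j} = {j. (r, j) \<in> D' \<and> d < j}" using outer[OF that] by auto
    then show ?thesis by (simp add: hw_def)
  qed
  have cd': "c \<le> d" using cd by simp
  define L where "L = lw c D m"
  define H where "H = hw d D (Suc m)"
  have setL: "set L = (\<lambda>j. m + j - 1) ` {j. (m, j) \<in> D \<and> j < c}"
    unfolding L_def lw_def by (rule set_row_part[OF fD])
  have setH: "set H = (\<lambda>j. Suc m + j - 1) ` {j. (Suc m, j) \<in> D \<and> d < j}"
    unfolding H_def hw_def by (rule set_row_part[OF fD])
  have Lb: "x \<in> set L \<Longrightarrow> Suc (Suc x) \<le> m + c" for x using setL m by auto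
  have Hb: "x \<in> set H \<Longrightarrow> Suc (m + d) \<le> x" for x using setH m by auto
  have farLH: "far L H" unfolding far_def using Lb Hb cd by fastforce
  have farMH: "far M H" if "\<And>x. x \<in> set M \<Longrightarrow> Suc x \<le> m + d" for M
    unfolding far_def using that Hb by fastforce
  have farLM: "far L M" if "\<And>x. x \<in> set M \<Longrightarrow> m + c \<le> x" for M
    unfolding far_def using that Lb by fastforce
  have R: "eqv (mw c d D m @ L @ H @ mw c d D (Suc m)) (mw c d D' m @ L @ H @ mw c d D' (Suc m))"
    by (rule rect[OF farLH farMH farMH farLM farLM mid]) (use bnd in auto)
  have "eqv (concat (map (row D) [1..<m]) @ hw d D m @ (mw c d D m @ L @ H @ mw c d D (Suc m)) @ lw c D (Suc m)
        @ concat (map (row D) [Suc (Suc m)..<Suc K]))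
     (concat (map (row D) [1..<m]) @ hw d D m @ (mw c d D' m @ L @ H @ mw c d D' (Suc m)) @ lw c D (Suc m)
        @ concat (map (row D) [Suc (Suc m)..<Suc K]))"
    using eqv_cong[OF R, of "concat (map (row D) [1..<m]) @ hw d D m" "lw c D (Suc m) @ concat (map (row D) [Suc (Suc m)..<Suc K])"]
    by (simp only: append_assoc)
  then show ?thesis
    unfolding split[OF fD K(1)] split[OF fD' K(2)] row_split[OF fD cd'] row_split[OF fD' cd']
      P[symmetric] Q[symmetric] lsame[of m, simplified, symmetric] lsame[of "Suc m", simplified, symmetric]
      hsame[of m, simplified, symmetric] hsame[of "Suc m", simplified, symmetric] L_def[symmetric] H_def[symmetric]
    by (simp only: append_assoc)
qed



lemma map_upt_shift: "map (\<lambda>j. j + k) [lo..<hi] = [lo + k..<hi + k]"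
  by (induction hi) auto

lemma mw_range:
  assumes "1 \<le> r" "{j. (r, j) \<in> E \<and> c \<le> j \<and> j \<le> d} = {lo..<hi}" "1 \<le> lo"
  shows "mw c d E r = dn (r + lo - 1) (hi - lo)"
proof -
  have f: "(\<lambda>j. r + j - 1) = (\<lambda>j. j + (r - 1))" using assms(1) by (auto simp: fun_eq_iff)
  show ?thesis
    unfolding mw_def assms(2) sorted_list_of_set_range dn_def rev_map[symmetric] f map_upt_shift
    using assms(1,3) by (cases "lo \<le> hi") (auto simp: add.commute)
qed

lemma mw_full:
  assumes "1 \<le> r" "c < d" "(r, c) \<notin> E" "(r, d) \<in> E" "\<forall>j. c < j \<and> j < d \<longrightarrow> (r, j) \<in> E"
  shows "mw c d E r = dn (r + c) (d - c)"
proof -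
  have "{j. (r, j) \<in> E \<and> c \<le> j \<and> j \<le> d} = {Suc c..<Suc d}"
  proof (rule set_eqI)
    fix x
    show "x \<in> {j. (r, j) \<in> E \<and> c \<le> j \<and> j \<le> d} \<longleftrightarrow> x \<in> {Suc c..<Suc d}"
    proof
      assume "x \<in> {j. (r, j) \<in> E \<and> c \<le> j \<and> j \<le> d}"
      then have x: "(r, x) \<in> E" "c \<le> x" "x \<le> d" by auto
      have "x \<noteq> c" using x(1) assms by auto
      then show "x \<in> {Suc c..<Suc d}" using x by simp
    next
      assume "x \<in> {Suc c..<Suc d}"
      then have x: "c \<le> x" "x \<le> d" "x \<noteq> c" by auto
      have "(r, x) \<in> E"
      proof (cases "x = c \<or> x = d")
        case True then show ?thesis using x assms by auto
      next
        case False then show ?thesis using x assms by simp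
      qed
      then show "x \<in> {j. (r, j) \<in> E \<and> c \<le> j \<and> j \<le> d}" using x by simp
    qed
  qed
  from mw_range[OF assms(1) this] show ?thesis by simp
qed

lemma mw_open:
  assumes "1 \<le> r" "c < d" "(r, c) \<notin> E" "(r, d) \<notin> E" "\<forall>j. c < j \<and> j < d \<longrightarrow> (r, j) \<in> E"
  shows "mw c d E r = dn (r + c) (d - c - 1)"
proof -
  have "{j. (r, j) \<in> E \<and> c \<le> j \<and> j \<le> d} = {Suc c..<d}"
  proof (rule set_eqI)
    fix x
    show "x \<in> {j. (r, j) \<in> E \<and> c \<le> j \<and> j \<le> d} \<longleftrightarrow> x \<in> {Suc c..<d}"
    proof
      assume "x \<in> {j. (r, j) \<in> E \<and> c \<le> j \<and> j \<le> d}"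
      then have x: "(r, x) \<in> E" "c \<le> x" "x \<le> d" by auto
      have "x \<noteq> c" "x \<noteq> d" using x(1) assms by auto
      then show "x \<in> {Suc c..<d}" using x by simp
    next
      assume "x \<in> {Suc c..<d}"
      then have x: "c \<le> x" "x \<le> d" "x \<noteq> c" "x \<noteq> d" by auto
      have "(r, x) \<in> E"
      proof (cases "x = c \<or> x = d")
        case True then show ?thesis using x assms by auto
      next
        case False then show ?thesis using x assms by simp
      qed
      then show "x \<in> {j. (r, j) \<in> E \<and> c \<le> j \<and> j \<le> d}" using x by simp
    qed
  qed
  from mw_range[OF assms(1) this] show ?thesis by simp
qed

lemma mw_left:
  assumes "1 \<le> r" "1 \<le> c" "c < d" "(r, c) \<in> E" "(r, d) \<notin> E" "\<forall>j. c < j \<and> j < d \<longrightarrow> (r, j) \<in> E"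
  shows "mw c d E r = dn (r + c - 1) (d - c)"
proof -
  have "{j. (r, j) \<in> E \<and> c \<le> j \<and> j \<le> d} = {c..<d}"
  proof (rule set_eqI)
    fix x
    show "x \<in> {j. (r, j) \<in> E \<and> c \<le> j \<and> j \<le> d} \<longleftrightarrow> x \<in> {c..<d}"
    proof
      assume "x \<in> {j. (r, j) \<in> E \<and> c \<le> j \<and> j \<le> d}"
      then have x: "(r, x) \<in> E" "c \<le> x" "x \<le> d" by auto
      have "x \<noteq> d" using x(1) assms by auto
      then show "x \<in> {c..<d}" using x by simp
    next
      assume "x \<in> {c..<d}"
      then have x: "c \<le> x" "x \<le> d" "x \<noteq> d" by auto
      have "(r, x) \<in> E"
      proof (cases "x = c \<or> x = d")
        case True then show ?thesis using x assms by auto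
      next
        case False then show ?thesis using x assms by simp
      qed
      then show "x \<in> {j. (r, j) \<in> E \<and> c \<le> j \<and> j \<le> d}" using x by simp
    qed
  qed
  from mw_range[OF assms(1) this assms(2)] show ?thesis by simp
qed

lemma bnd_dn: "x \<in> set (dn a k) \<Longrightarrow> a' \<le> a \<Longrightarrow> a + k \<le> b \<Longrightarrow> a' \<le> x \<and> Suc x \<le> b"
  by (auto simp: set_dn)

lemma chute1_eqv:
  assumes "chute1 D D'" "finite D"
  shows "finite D' \<and> eqv (reading_word D) (reading_word D')"
proof -
  obtain m c d where ci: "chute_interior D m c d" and h: "(m, c) \<notin> D" "(m + 1, c) \<notin> D" "(m, d) \<in> D" "(m + 1, d) \<notin> D"
    and D': "D' = (D - {(m, d)}) \<union> {(m + 1, c)}"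
    using assms(1) unfolding chute1_def by blast
  have m: "1 \<le> m" and c: "1 \<le> c" and cd: "c < d" and int: "\<And>j. c < j \<Longrightarrow> j < d \<Longrightarrow> (m, j) \<in> D \<and> (m + 1, j) \<in> D"
    using ci unfolding chute_interior_def by auto
  have fD': "finite D'" using assms(2) D' by simp
  have e1: "mw c d D m = dn (m + c) (d - c)" by (rule mw_full) (use m cd h int in auto)
  have e2: "mw c d D (Suc m) = dn (Suc (m + c)) (d - c - 1)" using mw_open[of "Suc m" c d D] m cd h int by auto
  have e3: "mw c d D' m = dn (m + c) (d - c - 1)" using mw_open[of m c d D'] m cd h int D' by auto
  have e4: "mw c d D' (Suc m) = dn (m + c) (d - c)" using mw_left[of "Suc m" c d D'] m c cd h int D' by auto
  have "eqv (reading_word D) (reading_word D')"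
  proof (rule core[OF assms(2) fD' m cd])
    show "(r, j) \<in> D \<longleftrightarrow> (r, j) \<in> D'" if "r \<noteq> m" "r \<noteq> Suc m" for r j using that D' by auto
    show "(r, j) \<in> D \<longleftrightarrow> (r, j) \<in> D'" if "r = m \<or> r = Suc m" "j < c \<or> d < j" for r j using that D' cd by auto
    show "eqv (mw c d D m @ mw c d D (Suc m)) (mw c d D' m @ mw c d D' (Suc m))"
      unfolding e1 e2 e3 e4 using keyL'[of "d - c" "m + c"] cd by simp
    show "m + c \<le> x \<and> Suc x \<le> m + d"
      if "x \<in> set (mw c d D m @ mw c d D (Suc m) @ mw c d D' m @ mw c d D' (Suc m))" for x
      using that cd unfolding e1 e2 e3 e4 by (auto simp: set_dn)
  qed
  then show ?thesis using fD' by simp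
qed

lemma chute2_eqv:
  assumes "chute2 D D'" "finite D"
  shows "finite D' \<and> eqv (reading_word D) (reading_word D')"
proof -
  obtain m c d where ci: "chute_interior D m c d" and h: "(m, c) \<notin> D" "(m + 1, c) \<in> D" "(m, d) \<in> D" "(m + 1, d) \<notin> D"
    and D': "D' = D - {(m, d)}"
    using assms(1) unfolding chute2_def by blast
  have m: "1 \<le> m" and c: "1 \<le> c" and cd: "c < d" and int: "\<And>j. c < j \<Longrightarrow> j < d \<Longrightarrow> (m, j) \<in> D \<and> (m + 1, j) \<in> D"
    using ci unfolding chute_interior_def by auto
  have fD': "finite D'" using assms(2) D' by simp
  have e1: "mw c d D m = dn (m + c) (d - c)" by (rule mw_full) (use m cd h int in auto)
  have e2: "mw c d D (Suc m) = dn (m + c) (d - c)" using mw_left[of "Suc m" c d D] m c cd h int by auto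
  have e3: "mw c d D' m = dn (m + c) (d - c - 1)" using mw_open[of m c d D'] m cd h int D' by auto
  have e4: "mw c d D' (Suc m) = dn (m + c) (d - c)" using mw_left[of "Suc m" c d D'] m c cd h int D' by auto
  have "eqv (reading_word D) (reading_word D')"
  proof (rule core[OF assms(2) fD' m cd])
    show "(r, j) \<in> D \<longleftrightarrow> (r, j) \<in> D'" if "r \<noteq> m" "r \<noteq> Suc m" for r j using that D' by auto
    show "(r, j) \<in> D \<longleftrightarrow> (r, j) \<in> D'" if "r = m \<or> r = Suc m" "j < c \<or> d < j" for r j using that D' cd by auto
    show "eqv (mw c d D m @ mw c d D (Suc m)) (mw c d D' m @ mw c d D' (Suc m))"
      unfolding e1 e2 e3 e4 using key2[of "d - c" "m + c"] cd by simp
    show "m + c \<le> x \<and> Suc x \<le> m + d"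
      if "x \<in> set (mw c d D m @ mw c d D (Suc m) @ mw c d D' m @ mw c d D' (Suc m))" for x
      using that cd unfolding e1 e2 e3 e4 by (auto simp: set_dn)
  qed
  then show ?thesis using fD' by simp
qed

lemma chute3_eqv:
  assumes "chute3 D D'" "finite D"
  shows "finite D' \<and> eqv (reading_word D) (reading_word D')"
proof -
  obtain m c d where ci: "chute_interior D m c d" and h: "(m, c) \<notin> D" "(m + 1, c) \<in> D" "(m, d) \<in> D" "(m + 1, d) \<notin> D"
    and D': "D' = D - {(m + 1, c)}"
    using assms(1) unfolding chute3_def by blast
  have m: "1 \<le> m" and c: "1 \<le> c" and cd: "c < d" and int: "\<And>j. c < j \<Longrightarrow> j < d \<Longrightarrow> (m, j) \<in> D \<and> (m + 1, j) \<in> D"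
    using ci unfolding chute_interior_def by auto
  have fD': "finite D'" using assms(2) D' by simp
  have e1: "mw c d D m = dn (m + c) (d - c)" by (rule mw_full) (use m cd h int in auto)
  have e2: "mw c d D (Suc m) = dn (m + c) (d - c)" using mw_left[of "Suc m" c d D] m c cd h int by auto
  have e3: "mw c d D' m = dn (m + c) (d - c)" using mw_full[of m c d D'] m cd h int D' by auto
  have e4: "mw c d D' (Suc m) = dn (Suc (m + c)) (d - c - 1)" using mw_open[of "Suc m" c d D'] m cd h int D' by auto
  have "eqv (reading_word D) (reading_word D')"
  proof (rule core[OF assms(2) fD' m cd])
    show "(r, j) \<in> D \<longleftrightarrow> (r, j) \<in> D'" if "r \<noteq> m" "r \<noteq> Suc m" for r j using that D' by auto
    show "(r, j) \<in> D \<longleftrightarrow> (r, j) \<in> D'" if "r = m \<or> r = Suc m" "j < c \<or> d < j" for r j using that D' cd by auto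
    show "eqv (mw c d D m @ mw c d D (Suc m)) (mw c d D' m @ mw c d D' (Suc m))"
      unfolding e1 e2 e3 e4 using key3[of "d - c" "m + c"] cd by simp
    show "m + c \<le> x \<and> Suc x \<le> m + d"
      if "x \<in> set (mw c d D m @ mw c d D (Suc m) @ mw c d D' m @ mw c d D' (Suc m))" for x
      using that cd unfolding e1 e2 e3 e4 by (auto simp: set_dn)
  qed
  then show ?thesis using fD' by simp
qed



lemma rw_letters: "pipe_dream D \<Longrightarrow> x \<in> set (reading_word D) \<Longrightarrow> 1 \<le> x"
proof -
  assume pd: "pipe_dream D" and x: "x \<in> set (reading_word D)"
  then obtain r where r: "1 \<le> r" "x \<in> set (row D r)" unfolding rw_row by auto
  then obtain c where c: "(r, c) \<in> D" "x = r + c - 1"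
    using fin_row'[of D r] pd unfolding row_def pipe_dream_def by auto
  then have "1 \<le> c" using pd unfolding pipe_dream_def by auto
  then show ?thesis using c r by simp
qed

lemma demazure_dm: "pipe_dream D \<Longrightarrow> demazure D = foldl dm id (reading_word D)"
  unfolding demazure_def using foldl_dstar_dm[OF reach_id] rw_letters by blast

lemma pd_sub: "pipe_dream D \<Longrightarrow> D' \<subseteq> D \<union> {(x, y)} \<Longrightarrow> 1 \<le> x \<Longrightarrow> 1 \<le> y \<Longrightarrow> pipe_dream D'"
  unfolding pipe_dream_def by (auto intro: finite_subset)

lemma pd_fwd:
  assumes "pipe_dream D" "chute1 D D' \<or> chute2 D D' \<or> chute3 D D'"
  shows "pipe_dream D'"
  using assms(2)
proof (elim disjE)
  assume "chute1 D D'"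
  then obtain m c d where "1 \<le> m" "1 \<le> c" "D' = (D - {(m, d)}) \<union> {(m + 1, c)}"
    unfolding chute1_def chute_interior_def by blast
  then show ?thesis by (intro pd_sub[OF assms(1), of _ "m + 1" c]) auto
next
  assume "chute2 D D'"
  then obtain m d where "D' = D - {(m, d)}" unfolding chute2_def by blast
  then show ?thesis by (intro pd_sub[OF assms(1), of _ 1 1]) auto
next
  assume "chute3 D D'"
  then obtain m c where "D' = D - {(m + 1, c)}" unfolding chute3_def by blast
  then show ?thesis by (intro pd_sub[OF assms(1), of _ 1 1]) auto
qed

lemma pd_bwd:
  assumes "pipe_dream D" "chute1 D' D \<or> chute2 D' D \<or> chute3 D' D"
  shows "pipe_dream D'"
  using assms(2)
proof (elim disjE)
  assume "chute1 D' D"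
  then obtain m c d where "1 \<le> m" "c < d" "(m, d) \<in> D'" "(m + 1, c) \<notin> D'" "D = (D' - {(m, d)}) \<union> {(m + 1, c)}"
    unfolding chute1_def chute_interior_def by blast
  then show ?thesis by (intro pd_sub[OF assms(1), of _ m d]) auto
next
  assume "chute2 D' D"
  then obtain m c d where "1 \<le> m" "c < d" "D = D' - {(m, d)}"
    unfolding chute2_def chute_interior_def by blast
  then show ?thesis by (intro pd_sub[OF assms(1), of _ m d]) auto
next
  assume "chute3 D' D"
  then obtain m c d where "1 \<le> m" "1 \<le> c" "D = D' - {(m + 1, c)}"
    unfolding chute3_def chute_interior_def by blast
  then show ?thesis by (intro pd_sub[OF assms(1), of _ "m + 1" c]) auto
qed

lemma dem_eq:
  assumes "pipe_dream D" "chute1 D D' \<or> chute2 D D' \<or> chute3 D D'"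
  shows "demazure D' = demazure D"
proof -
  have f: "finite D" using assms(1) by (simp add: pipe_dream_def)
  have "eqv (reading_word D) (reading_word D')"
    using assms(2) chute1_eqv[OF _ f] chute2_eqv[OF _ f] chute3_eqv[OF _ f] by blast
  then show ?thesis
    using demazure_dm[OF assms(1)] demazure_dm[OF pd_fwd[OF assms]]
    unfolding eqv_def by (simp add: inj_on_id)
qed

theorem theorem2p2:
  fixes w :: "nat \<Rightarrow> nat" and D D' :: "(nat \<times> nat) set"
  assumes "w \<in> S_inf"
    and "D \<in> PD w"
    and "chute1 D D' \<or> chute2 D D' \<or> chute3 D D' \<or>
         chute1 D' D \<or> chute2 D' D \<or> chute3 D' D"
  shows "D' \<in> PD w"
proof -
  have pd: "pipe_dream D" and dw: "demazure D = w" using assms(2) by (auto simp: PD_def)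
  show ?thesis
  proof (cases "chute1 D D' \<or> chute2 D D' \<or> chute3 D D'")
    case True
    then show ?thesis using pd_fwd[OF pd True] dem_eq[OF pd True] dw by (simp add: PD_def)
  next
    case False
    then have b: "chute1 D' D \<or> chute2 D' D \<or> chute3 D' D" using assms(3) by blast
    have pd': "pipe_dream D'" by (rule pd_bwd[OF pd b])
    show ?thesis using pd' dem_eq[OF pd' b] dw by (simp add: PD_def)
  qed
qed


end
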